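(* Let $L\in\{2,3,4\}$, $\sigma$ the ReLU, and $\mathbf A$ the matrix whose columns are all deep narrow features $f^L_{\mathbf s,\mathbf j,k}(\mathbf X)$, $(\mathbf s,\mathbf j,k)\in\mathcal M$. Then the optimal value $\|\mathbf z^*\|_1$ of the minimum-norm problem $\min_{\mathbf z,\xi}\|\mathbf z\|_1$ subject to $\mathbf A\mathbf z+\xi\mathbf 1=\mathbf y$ is at least $\max_{n\in[N-1]}|\mathrm{s}_n|$, where $\mathrm{s}_n=\frac{y_n-y_{n+1}}{x_n-x_{n+1}}$.
   Context: Data $x_1>\cdots>x_N$ real ($N\ge2$), $\mathbf X=(x_1,\dots,x_N)^T$, $\mathbf y\in\mathbb R^N$, $\xi\in\mathbb R$ free, $[n]=\{1,\dots,n\}$. Ramps: $r^+_{a}(x)=(x-a)_+$, $r^-_a(x)=(a-x)_+$. For $a_1\in[-\infty,\infty)$, $a_2\in(-\infty,\infty]$ with $a_1\le a_2$: $r^+_{a_1,a_2}(x)=0$ for $x\le a_1$, $x-a_1$ for $a_1\le x\le a_2$, $a_2-a_1$ for $x\ge a_2$; $r^-_{a_1,a_2}(x)=a_2-a_1$ for $x\le a_1$, $a_2-x$ for $a_1\le x\le a_2$, $0$ for $x\ge a_2$; if $a_1>a_2$ both are $0$. Index set $\mathcal M=\{-1,1\}^{L-1}\times[N]^{L-1}\times\mathcal M^{(3)}$ with $\mathcal M^{(3)}=\{0\}$ if $L<4$ and $\{0,1\}$ if $L=4$. For $(\mathbf s,\mathbf j,k)\in\mathcal M$ let $a_1=x_{j_1}$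 if $k=0$, $a_1=2x_{j_2}-x_{j_1}$ if $k=1$. Then $f^L_{\mathbf s,\mathbf j,k}$ is: $L=2$: $(x_{j_1}-x)_+$ if $s_1=-1$, $(x-x_{j_1})_+$ if $s_1=1$. $L=3$: if $s_2=1$: $r^-_{\min\{x_{j_1},x_{j_2}\}}$ ($s_1=-1$), $r^+_{\max\{x_{j_1},x_{j_2}\}}$ ($s_1=1$); if $s_2=-1$: $r^+_{x_{j_2},x_{j_1}}$ ($s_1=-1$), $r^-_{x_{j_1},x_{j_2}}$ ($s_1=1$). $L=4$: if $s_2=s_3=1$: $r^-_{\min\{a_1,x_{j_2},x_{j_3}\}}$ ($s_1=-1$), $r^+_{\max\{a_1,x_{j_2},x_{j_3}\}}$ ($s_1=1$); if $s_2=1,s_3=-1$: $r^+_{x_{j_3},\min\{a_1,x_{j_2}\}}$ ($s_1=-1$), $r^-_{\max\{a_1,x_{j_2}\},x_{j_3}}$ ($s_1=1$); if $s_2=-1,s_3=1$: $r^+_{\max\{x_{j_2},x_{j_3}\},a_1}$ ($s_1=-1$), $r^-_{a_1,\min\{x_{j_2},x_{j_3}\}}$ ($s_1=1$); if $s_2=s_3=-1$: $r^-_{x_{j_2},\min\{a_1,x_{j_3}\}}$ ($s_1=-1$), $r^+_{\max\{a_1,x_{j_3}\},x_{j_2}}$ ($s_1=1$). The corresponding column is $f^L_{\mathbf s,\mathbf j,k}(\mathbf X)\in\mathbb R^N$ (entrywise evaluation). *)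

theory Defs
  imports "HOL-Analysis.Analysis"
begin

text \<open>Ramps. Single-breakpoint ramps r^+_a, r^-_a and two-breakpoint ramps
  r^+_{a1,a2}, r^-_{a1,a2} (only finite breakpoints occur in the features).\<close>

definition rp :: "real \<Rightarrow> real \<Rightarrow> real" where
  "rp a x = max (x - a) 0"

definition rm :: "real \<Rightarrow> real \<Rightarrow> real" where
  "rm a x = max (a - x) 0"

definition rp2 :: "real \<Rightarrow> real \<Rightarrow> real \<Rightarrow> real" where
  "rp2 a1 a2 x = (if a1 > a2 then 0 else
                  if x \<le> a1 then 0 else if x \<le> a2 then x - a1 else a2 - a1)"

definition rm2 :: "real \<Rightarrow> real \<Rightarrow> real \<Rightarrow> real" where
  "rm2 a1 a2 x = (if a1 > a2 then 0 else
                  if x \<le> a1 then a2 - a1 else if x \<le> a2 then a2 - x else 0)"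

text \<open>Index set M. s and j are lists of length L-1 (s!0 = s_1, j!0 = j_1, ...).\<close>

definition idxM :: "nat \<Rightarrow> nat \<Rightarrow> (int list \<times> nat list \<times> nat) set" where
  "idxM L N = {(s, j, k). length s = L - 1 \<and> set s \<subseteq> {-1, 1}
               \<and> length j = L - 1 \<and> set j \<subseteq> {1..N}
               \<and> k \<in> (if L < 4 then {0} else {0, 1})}"

definition feat :: "nat \<Rightarrow> (nat \<Rightarrow> real) \<Rightarrow> int list \<Rightarrow> nat list \<Rightarrow> nat \<Rightarrow> real \<Rightarrow> real" where
  "feat L xs s j k t =
    (let s1 = s ! 0; s2 = s ! 1; s3 = s ! 2;
         x1 = xs (j ! 0); x2 = xs (j ! 1); x3 = xs (j ! 2);
         a1 = (if k = 0 then x1 else 2 * x2 - x1)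
     in if L = 2 then (if s1 = -1 then rm x1 t else rp x1 t)
     else if L = 3 then
       (if s2 = 1 then (if s1 = -1 then rm (min x1 x2) t else rp (max x1 x2) t)
        else (if s1 = -1 then rp2 x2 x1 t else rm2 x1 x2 t))
     else
       (if s2 = 1 \<and> s3 = 1 then
          (if s1 = -1 then rm (min a1 (min x2 x3)) t else rp (max a1 (max x2 x3)) t)
        else if s2 = 1 \<and> s3 = -1 then
          (if s1 = -1 then rp2 x3 (min a1 x2) t else rm2 (max a1 x2) x3 t)
        else if s2 = -1 \<and> s3 = 1 then
          (if s1 = -1 then rp2 (max x2 x3) a1 t else rm2 a1 (min x2 x3) t)
        else
          (if s1 = -1 then rm2 x2 (min a1 x3) t else rp2 (max a1 x3) x2 t)))"

end

theory Submission
  imports Defs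
begin

lemma rp_lip: "\<bar>rp a t - rp a u\<bar> \<le> \<bar>t - u\<bar>"
  unfolding rp_def by linarith
lemma rm_lip: "\<bar>rm a t - rm a u\<bar> \<le> \<bar>t - u\<bar>"
  unfolding rm_def by linarith
lemma rp2_lip: "\<bar>rp2 a b t - rp2 a b u\<bar> \<le> \<bar>t - u\<bar>"
  unfolding rp2_def by (auto split: if_splits)
lemma rm2_lip: "\<bar>rm2 a b t - rm2 a b u\<bar> \<le> \<bar>t - u\<bar>"
  unfolding rm2_def by (auto split: if_splits)

definition lipf :: "(real \<Rightarrow> real) \<Rightarrow> bool" where
  "lipf g \<longleftrightarrow> (\<forall>t u. \<bar>g t - g u\<bar> \<le> \<bar>t - u\<bar>)"

lemma lipf_if: "lipf f \<Longrightarrow> lipf g \<Longrightarrow> lipf (\<lambda>t. if c then f t else g t)"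
  by (simp add: lipf_def)
lemma lipf_rp: "lipf (\<lambda>t. rp a t)" using rp_lip by (simp add: lipf_def)
lemma lipf_rm: "lipf (\<lambda>t. rm a t)" using rm_lip by (simp add: lipf_def)
lemma lipf_rp2: "lipf (\<lambda>t. rp2 a b t)" using rp2_lip by (simp add: lipf_def)
lemma lipf_rm2: "lipf (\<lambda>t. rm2 a b t)" using rm2_lip by (simp add: lipf_def)

lemma feat_lipf: "lipf (feat L xs s j k)"
proof -
  have e: "feat L xs s j k = (\<lambda>t. feat L xs s j k t)" by simp
  show ?thesis
    apply (subst e) unfolding feat_def Let_def
    by (intro lipf_if lipf_rp lipf_rm lipf_rp2 lipf_rm2)
qed

lemma feat_lip: "\<bar>feat L xs s j k t - feat L xs s j k u\<bar> \<le> \<bar>t - u\<bar>"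
  using feat_lipf unfolding lipf_def by blast

theorem lemma5:
  fixes L N :: nat and x y :: "nat \<Rightarrow> real"
    and z :: "int list \<times> nat list \<times> nat \<Rightarrow> real" and \<xi> :: real
  assumes "L \<in> {2, 3, 4}"
    and "N \<ge> 2"
    and "\<And>i. 1 \<le> i \<Longrightarrow> i < N \<Longrightarrow> x i > x (i + 1)"
    and feasible: "\<And>i. i \<in> {1..N} \<Longrightarrow>
          (\<Sum>m\<in>idxM L N. z m * feat L x (fst m) (fst (snd m)) (snd (snd m)) (x i)) + \<xi> = y i"
  shows "(\<Sum>m\<in>idxM L N. \<bar>z m\<bar>)
           \<ge> (MAX n\<in>{1..N-1}. \<bar>(y n - y (n + 1)) / (x n - x (n + 1))\<bar>)"
proof (rule Max.boundedI)
  show "finite ((\<lambda>n. \<bar>(y n - y (n + 1)) / (x n - x (n + 1))\<bar>) ` {1..N-1})" by simp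
  show "(\<lambda>n. \<bar>(y n - y (n + 1)) / (x n - x (n + 1))\<bar>) ` {1..N-1} \<noteq> {}" using assms(2) by simp
  fix v assume "v \<in> (\<lambda>n. \<bar>(y n - y (n + 1)) / (x n - x (n + 1))\<bar>) ` {1..N-1}"
  then obtain n where n: "1 \<le> n" "n \<le> N - 1" and v: "v = \<bar>(y n - y (n + 1)) / (x n - x (n + 1))\<bar>" by auto
  let ?f = "\<lambda>m t. feat L x (fst m) (fst (snd m)) (snd (snd m)) t"
  have d: "x n - x (n+1) > 0" using assms(3)[of n] n assms(2) by simp
  have "y n - y (n+1) = (\<Sum>m\<in>idxM L N. z m * (?f m (x n) - ?f m (x (n+1))))"
  proof -
    have a: "n \<in> {1..N}" "n+1 \<in> {1..N}" using n assms(2) by auto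
    show ?thesis
      using feasible[OF a(1)] feasible[OF a(2)]
      unfolding right_diff_distrib sum_subtractf by linarith
  qed
  hence "\<bar>y n - y (n+1)\<bar> \<le> (\<Sum>m\<in>idxM L N. \<bar>z m * (?f m (x n) - ?f m (x (n+1)))\<bar>)"
    by (simp only: sum_abs)
  also have "\<dots> \<le> (\<Sum>m\<in>idxM L N. \<bar>z m\<bar> * (x n - x (n+1)))"
  proof (rule sum_mono)
    fix m
    have "\<bar>?f m (x n) - ?f m (x (n+1))\<bar> \<le> x n - x (n+1)"
      using feat_lip[of L x "fst m" "fst (snd m)" "snd (snd m)" "x n" "x (n+1)"] d by simp
    thus "\<bar>z m * (?f m (x n) - ?f m (x (n+1)))\<bar> \<le> \<bar>z m\<bar> * (x n - x (n+1))"
      unfolding abs_mult by (rule mult_left_mono) simp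
  qed
  also have "\<dots> = (\<Sum>m\<in>idxM L N. \<bar>z m\<bar>) * (x n - x (n+1))"
    by (simp add: sum_distrib_right)
  finally show "v \<le> (\<Sum>m\<in>idxM L N. \<bar>z m\<bar>)"
    using d unfolding v by (simp add: abs_div pos_divide_le_eq)
qed

end
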